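(* Let $(p,q)=(6/5,2)$. Then for every $x \in [0,\pi_{6/5,2}/2]$, \[ \sin_{6/5,2}{(2x)} =\sqrt{1-\left(\frac{9-8\sin_{6/5,2}^2{x}-4\sin_{6/5,2}^2{x}\,\cos_{6/5,2}^{2/5}{x}} {9-8\sin_{6/5,2}^2{x}+8\sin_{6/5,2}^2{x}\,\cos_{6/5,2}^{2/5}{x}}\right)^3}. \]
   Context: For $1<p,q<\infty$ let $F_{p,q}(x)=\int_0^x (1-t^q)^{-1/p}\,dt$ for $x\in[0,1]$, and $\pi_{p,q}=2F_{p,q}(1)$. The generalized sine $\sin_{p,q}$ is defined on $[0,\pi_{p,q}/2]$ as the inverse function of $F_{p,q}$ (an increasing function onto $[0,1]$), extended to $(\pi_{p,q}/2,\pi_{p,q}]$ by $\sin_{p,q}x=\sin_{p,q}(\pi_{p,q}-x)$, and to all of $\mathbb{R}$ as an odd $2\pi_{p,q}$-periodic function. It is $C^1$, and the generalized cosine is $\cos_{p,q}x := \frac{d}{dx}\sin_{p,q}x$; it satisfies $|\cos_{p,q}x|^p+|\sin_{p,q}x|^q=1$, and $\cos_{p,q}x\ge 0$ on $[0,\pi_{p,q}/2]$. *)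

theory Defs
  imports "HOL-Analysis.Analysis"
begin

definition F_pq :: "real \<Rightarrow> real \<Rightarrow> real \<Rightarrow> real" where
  "F_pq p q x = integral {0..x} (\<lambda>t. (1 - t powr q) powr (-1 / p))"

definition pi_pq :: "real \<Rightarrow> real \<Rightarrow> real" where
  "pi_pq p q = 2 * F_pq p q 1"

definition sin_base :: "real \<Rightarrow> real \<Rightarrow> real \<Rightarrow> real" where
  "sin_base p q x = (THE y. y \<in> {0..1} \<and> F_pq p q y = x)"

definition sin_half :: "real \<Rightarrow> real \<Rightarrow> real \<Rightarrow> real" where
  "sin_half p q y = (if y \<le> pi_pq p q / 2 then sin_base p q y else sin_base p q (pi_pq p q - y))"

text \<open>Odd, 2 pi_{p,q}-periodic extension to all of R.\<close>
definition sin_pq :: "real \<Rightarrow> real \<Rightarrow> real \<Rightarrow> real" where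
  "sin_pq p q x =
     (let P = pi_pq p q; r = x - 2 * P * of_int \<lfloor>x / (2 * P)\<rfloor>
      in if r \<le> P then sin_half p q r else - sin_half p q (2 * P - r))"

definition cos_pq :: "real \<Rightarrow> real \<Rightarrow> real \<Rightarrow> real" where
  "cos_pq p q x = deriv (sin_pq p q) x"

end

theory Submission imports Defs begin

definition ig :: "real \<Rightarrow> real" where "ig t = (1 - t powr 2) powr (-1 / (6/5))"

abbreviation FF :: "real \<Rightarrow> real" where "FF \<equiv> F_pq (6/5) 2"

lemma FF_eq: "FF x = integral {0..x} ig"
  unfolding F_pq_def ig_def[abs_def] by simp

lemma sq_lt1: "0 \<le> (t::real) \<Longrightarrow> t < 1 \<Longrightarrow> t^2 < 1"
  by (simp add: abs_square_less_1)

lemma ig_alt: "0 \<le> t \<Longrightarrow> ig t = (1 - t^2) powr (-5/6)"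
  by (simp add: ig_def)

lemma ig_ge1: assumes "0 \<le> t" "t < 1" shows "ig t \<ge> 1"
proof -
  have a: "0 < 1 - t^2" "1 - t^2 \<le> 1" using assms abs_square_less_1[of t] by auto
  have "(1 - t^2) powr (5/6) \<le> 1" using a by (intro powr_le1) auto
  moreover have "(1 - t^2) powr (5/6) > 0" using a by auto
  ultimately have "inverse ((1 - t^2) powr (5/6)) \<ge> 1" by (simp add: one_le_inverse)
  then show ?thesis using assms by (simp add: ig_alt powr_minus[symmetric])
qed

lemma ig_cont: "continuous_on {0..<1} ig"
proof -
  have "continuous_on {0..<1} (\<lambda>t::real. (1 - t^2) powr (-5/6))"
    by (intro continuous_intros) (use sq_lt1 in force)
  then show ?thesis by (rule continuous_on_cong[THEN iffD1, rotated 2]) (auto simp: ig_alt)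
qed

lemma g_int: "((\<lambda>t::real. (1 - t) powr (-5/6)) has_integral 6) {0..1}"
proof -
  have "((\<lambda>t::real. (1 - t) powr (-5/6)) has_integral ((-6 * (1 - 1) powr (1/6)) - (-6 * (1 - 0) powr (1/6)))) {0..1}"
  proof (rule fundamental_theorem_of_calculus_interior)
    show "continuous_on {0..1::real} (\<lambda>t. -6 * (1 - t) powr (1/6))"
      by (intro continuous_intros continuous_on_powr') auto
    fix x :: real assume "x \<in> {0<..<1}"
    then have "((\<lambda>t. -6 * (1 - t) powr (1/6)) has_real_derivative (1 - x) powr (-5/6)) (at x)"
      by (auto intro!: derivative_eq_intros simp: field_simps)
    then show "((\<lambda>t. -6 * (1 - t) powr (1/6)) has_vector_derivative (1 - x) powr (-5/6)) (at x)"
      by (simp add: has_real_derivative_iff_has_vector_derivative)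
  qed auto
  then show ?thesis by simp
qed

lemma ig_int: "ig integrable_on {0..1}"
proof -
  have gi: "(\<lambda>t::real. (1 - t) powr (-5/6)) integrable_on {0..<1}"
    by (rule integrable_spike_set[OF has_integral_integrable[OF g_int]])
       (auto intro: negligible_subset[of "{1}"])
  have "ig integrable_on {0..<1}"
  proof (rule measurable_bounded_by_integrable_imp_integrable[OF _ gi])
    show "ig \<in> borel_measurable (lebesgue_on {0..<1})"
      by (rule continuous_imp_measurable_on_sets_lebesgue[OF ig_cont]) auto
    show "{0..<1::real} \<in> sets lebesgue" by auto
    fix t :: real assume t: "t \<in> {0..<1}"
    have "ig t \<ge> 1" using t ig_ge1 by auto
    moreover have "ig t \<le> (1 - t) powr (-5/6)"
      using t abs_square_less_1[of t] by (simp add: ig_alt, intro powr_mono2') (auto simp: power2_eq_square intro: mult_left_le_one_le)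
    ultimately show "norm (ig t) \<le> (1 - t) powr (-5/6)" by simp
  qed
  then show ?thesis
    by (rule integrable_spike_set) (auto intro: negligible_subset[of "{1}"])
qed

lemma FF_fun: "FF = (\<lambda>x. integral {0..x} ig)"
  by (rule ext) (simp add: FF_eq)

lemma FF_cont: "continuous_on {0..1} FF"
  unfolding FF_fun by (rule indefinite_integral_continuous_1[OF ig_int])

lemma FF_deriv: assumes "0 < t" "t < 1" shows "(FF has_real_derivative ig t) (at t)"
proof -
  define b where "b = (1 + t) / 2"
  have b: "t < b" "b < 1" using assms by (auto simp: b_def)
  have "continuous_on {0..b} ig" using ig_cont by (rule continuous_on_subset) (use b in auto)
  then have "((\<lambda>x. integral {0..x} ig) has_real_derivative ig t) (at t within {0..b})"
    by (rule integral_has_real_derivative) (use assms b in auto)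
  then have "(FF has_real_derivative ig t) (at t within {0<..<b})"
    unfolding FF_fun by (rule DERIV_subset) auto
  then show ?thesis using at_within_open[of t "{0<..<b}"] assms b by auto
qed

lemma FF0: "FF 0 = 0" by (simp add: FF_eq)

lemma FF_strict: assumes "0 \<le> a" "a < b" "b \<le> 1" shows "FF a < FF b"
proof (rule DERIV_pos_imp_increasing_open[OF assms(2)])
  fix x assume "a < x" "x < b"
  then show "\<exists>y. DERIV FF x :> y \<and> y > 0"
    using FF_deriv[of x] ig_ge1[of x] assms by (intro exI[of _ "ig x"]) auto
next
  show "continuous_on {a..b} FF" using FF_cont by (rule continuous_on_subset) (use assms in auto)
qed

lemma FF_mono: assumes "0 \<le> a" "a \<le> b" "b \<le> 1" shows "FF a \<le> FF b"
  using FF_strict[of a b] assms by (cases "a = b") auto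

lemma FF_inj: assumes "a \<in> {0..1}" "b \<in> {0..1}" "FF a = FF b" shows "a = b"
  using FF_strict[of a b] FF_strict[of b a] assms by (cases a b rule: linorder_cases) auto

lemma FF1_pos: "FF 1 > 0" using FF_strict[of 0 1] FF0 by simp

abbreviation sb :: "real \<Rightarrow> real" where "sb \<equiv> sin_base (6/5) 2"

lemma FF_ex: assumes "0 \<le> y" "y \<le> FF 1" shows "\<exists>t. t \<in> {0..1} \<and> FF t = y"
  using IVT'[of FF 0 y 1] FF_cont FF0 assms by auto

lemma sb_props: assumes "0 \<le> y" "y \<le> FF 1" shows "sb y \<in> {0..1}" "FF (sb y) = y"
proof -
  have "\<exists>!t. t \<in> {0..1} \<and> FF t = y" using FF_ex[OF assms] FF_inj by blast
  from theI'[OF this] show "sb y \<in> {0..1}" "FF (sb y) = y" unfolding sin_base_def by auto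
qed

lemma sb_FF: assumes "t \<in> {0..1}" shows "sb (FF t) = t"
  unfolding sin_base_def by (rule the_equality) (use assms FF_inj in auto)

lemma FF_image: "FF ` {0..1} = {0..FF 1}"
proof
  show "FF ` {0..1} \<subseteq> {0..FF 1}" using FF_mono FF0 by fastforce
  show "{0..FF 1} \<subseteq> FF ` {0..1}" using sb_props by (metis atLeastAtMost_iff image_eqI subsetI)
qed

lemma sb_cont: "continuous_on {0..FF 1} sb"
  using continuous_on_inv[OF FF_cont compact_Icc, of sb] sb_FF FF_image by simp

lemma sb_strict: assumes "0 \<le> x" "x < y" "y \<le> FF 1" shows "sb x < sb y"
proof (rule ccontr)
  assume "\<not> sb x < sb y"
  then have "FF (sb y) \<le> FF (sb x)" using sb_props[of x] sb_props[of y] assms by (intro FF_mono) auto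
  then show False using sb_props[of x] sb_props[of y] assms by auto
qed

lemma sb0: "sb 0 = 0" using sb_FF[of 0] FF0 by simp
lemma sb1: "sb (FF 1) = 1" using sb_FF[of 1] by simp

lemma sb_deriv: assumes "0 < y" "y < FF 1"
  shows "(sb has_real_derivative (1 - (sb y)^2) powr (5/6)) (at y)"
proof -
  have s: "sb y \<in> {0..1}" "FF (sb y) = y" using sb_props[of y] assms by auto
  have s0: "sb y \<noteq> 0" using s FF0 assms by auto
  have s1: "sb y \<noteq> 1" using s assms by auto
  have d: "DERIV FF (sb y) :> ig (sb y)" using FF_deriv[of "sb y"] s s0 s1 by auto
  have ic: "isCont sb y"
    using continuous_on_interior[OF sb_cont, of y] assms by auto
  have "DERIV sb y :> inverse (ig (sb y))"
  proof (rule DERIV_inverse_function[where f=FF and g=sb and x=y and a=0 and b="FF 1"])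
    show "DERIV FF (sb y) :> ig (sb y)" by (rule d)
    show "isCont sb y" by (rule ic)
    show "0 < y" "y < FF 1" using assms by auto
    show "ig (sb y) \<noteq> 0" using ig_ge1[of "sb y"] s s1 by auto
    fix z assume "0 < z" "z < FF 1" then show "FF (sb z) = z" using sb_props by auto
  qed
  moreover have "inverse (ig (sb y)) = (1 - (sb y)^2) powr (5/6)"
    using s by (simp add: ig_alt powr_minus[symmetric])
  ultimately show ?thesis by simp
qed

abbreviation SP :: "real \<Rightarrow> real" where "SP \<equiv> sin_pq (6/5) 2"

lemma P_eq: "pi_pq (6/5) 2 = 2 * FF 1" by (simp add: pi_pq_def)

lemma sinpq_half: assumes "0 \<le> y" "y \<le> pi_pq (6/5) 2"
  shows "SP y = sin_half (6/5) 2 y"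
proof -
  have P: "pi_pq (6/5) 2 > 0" using FF1_pos P_eq by simp
  have "\<lfloor>y / (2 * pi_pq (6/5) 2)\<rfloor> = 0"
    using assms P by (simp add: floor_eq_iff field_simps)
  then show ?thesis using assms unfolding sin_pq_def Let_def by simp
qed

lemma sinpq_first: assumes "0 \<le> y" "y \<le> FF 1" shows "SP y = sb y"
  using sinpq_half[of y] assms FF1_pos by (simp add: P_eq sin_half_def)

lemma sinpq_second: assumes "FF 1 \<le> y" "y \<le> 2 * FF 1" shows "SP y = sb (2 * FF 1 - y)"
proof (cases "y = FF 1")
  case True then show ?thesis using sinpq_first[of y] FF1_pos by simp
next
  case False then show ?thesis using sinpq_half[of y] assms FF1_pos by (simp add: P_eq sin_half_def)
qed

lemma cos_inner: assumes "0 < x" "x < FF 1"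
  shows "cos_pq (6/5) 2 x = (1 - (sb x)^2) powr (5/6)"
proof -
  have "(SP has_real_derivative (1 - (sb x)^2) powr (5/6)) (at x)"
    by (rule has_field_derivative_transform_within_open[OF sb_deriv[OF assms], of "{0<..<FF 1}"])
       (use assms sinpq_first in auto)
  then show ?thesis unfolding cos_pq_def by (rule DERIV_imp_deriv)
qed

lemma sb_gap: assumes "0 < k" "k < FF 1"
  shows "1 - sb (FF 1 - k) \<le> k * (1 - (sb (FF 1 - k))^2) powr (5/6)"
proof -
  define a where "a = FF 1 - k"
  have a: "0 < a" "a < FF 1" using assms by (auto simp: a_def)
  have "\<exists>l z. a < z \<and> z < FF 1 \<and> DERIV sb z :> l \<and> sb (FF 1) - sb a = (FF 1 - a) * l"
  proof (rule MVT[OF a(2)])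
    show "continuous_on {a..FF 1} sb" using sb_cont by (rule continuous_on_subset) (use a in auto)
    fix z assume "a < z" "z < FF 1"
    then show "sb differentiable (at z)" using sb_deriv[of z] a real_differentiable_def by auto
  qed
  then obtain l z where z: "a < z" "z < FF 1" "DERIV sb z :> l" "sb (FF 1) - sb a = (FF 1 - a) * l"
    by blast
  have l: "l = (1 - (sb z)^2) powr (5/6)" using DERIV_unique[OF z(3) sb_deriv[of z]] z a by auto
  have sa: "0 \<le> sb a" "sb a < sb z" "sb z \<le> 1"
    using sb_props[of a] sb_props[of z] sb_strict[of a z] a z by auto
  have "(1 - (sb z)^2) powr (5/6) \<le> (1 - (sb a)^2) powr (5/6)"
  proof (rule powr_mono2)
    show "0 \<le> 1 - (sb z)^2" using sa by (simp add: abs_le_square_iff power_le_one)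
    show "1 - (sb z)^2 \<le> 1 - (sb a)^2" using sa by (simp add: power_mono)
  qed auto
  then have "(FF 1 - a) * l \<le> k * (1 - (sb a)^2) powr (5/6)"
    using l assms by (simp add: a_def mult_left_mono)
  then show ?thesis using z(4) sb1 by (simp add: a_def)
qed

lemma cos_FF1: "cos_pq (6/5) 2 (FF 1) = 0"
proof -
  define E where "E = (\<lambda>h. (1 - (sb (FF 1 - \<bar>h\<bar>))^2) powr (5/6))"
  have c1: "continuous_on {-FF 1..FF 1} (\<lambda>h. sb (FF 1 - \<bar>h\<bar>))"
    by (rule continuous_on_compose2[OF sb_cont]) (auto intro!: continuous_intros)
  have sb_le: "0 \<le> sb y \<and> sb y \<le> 1" if "y \<in> {0..FF 1}" for y using sb_props[of y] that by auto
  have "continuous_on {-FF 1..FF 1} E" unfolding E_def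
  proof (rule continuous_on_powr')
    show "continuous_on {- FF 1..FF 1} (\<lambda>x. 1 - (sb (FF 1 - \<bar>x\<bar>))\<^sup>2)"
      by (intro continuous_intros c1)
    show "\<forall>x\<in>{- FF 1..FF 1}. 0 \<le> 1 - (sb (FF 1 - \<bar>x\<bar>))\<^sup>2 \<and> (1 - (sb (FF 1 - \<bar>x\<bar>))\<^sup>2 = 0 \<longrightarrow> 0 < (5/6::real))"
      using sb_le by (auto simp: power_le_one)
  qed auto
  then have "isCont E 0"
    using continuous_on_interior[of "{-FF 1..FF 1}" E 0] FF1_pos by auto
  then have lim: "(E \<longlongrightarrow> 0) (at 0)"
    using isContD[of 0 E] sb1 by (simp add: E_def)
  have "((\<lambda>h. (SP (FF 1 + h) - SP (FF 1)) / h) \<longlongrightarrow> 0) (at 0)"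
  proof (rule Lim_null_comparison[OF _ lim])
    show "\<forall>\<^sub>F h in at 0. norm ((SP (FF 1 + h) - SP (FF 1)) / h) \<le> E h"
      unfolding eventually_at
    proof (intro exI[of _ "FF 1"] conjI ballI impI)
      show "FF 1 > 0" by (rule FF1_pos)
      fix h :: real assume h: "h \<noteq> 0 \<and> dist h 0 < FF 1"
      have eq: "SP (FF 1 + h) = sb (FF 1 - \<bar>h\<bar>)"
      proof (cases "h < 0")
        case True then show ?thesis using sinpq_first[of "FF 1 + h"] h by auto
      next
        case False then show ?thesis using sinpq_second[of "FF 1 + h"] h by auto
      qed
      have s1: "SP (FF 1) = 1" using sinpq_first[of "FF 1"] sb1 FF1_pos by simp
      have k: "0 < \<bar>h\<bar>" "\<bar>h\<bar> < FF 1" using h by auto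
      have le1: "sb (FF 1 - \<bar>h\<bar>) \<le> 1" using sb_le[of "FF 1 - \<bar>h\<bar>"] k by auto
      have "norm ((SP (FF 1 + h) - SP (FF 1)) / h) = (1 - sb (FF 1 - \<bar>h\<bar>)) / \<bar>h\<bar>"
        using eq s1 le1 by (simp add: abs_div)
      also have "\<dots> \<le> E h" unfolding E_def using sb_gap[OF k] k by (simp add: divide_le_eq mult.commute)
      finally show "norm ((SP (FF 1 + h) - SP (FF 1)) / h) \<le> E h" .
    qed
  qed
  then have "DERIV SP (FF 1) :> 0" by (simp add: DERIV_def)
  then show ?thesis unfolding cos_pq_def by (rule DERIV_imp_deriv)
qed


definition Cp :: "real \<Rightarrow> real" where "Cp v = 2* v^4 + 2* v^2 - 1"
definition Bp :: "real \<Rightarrow> real" where "Bp v = 1 + 8* v^2 + 8* v^6 - 8* v^8"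
definition Pp :: "real \<Rightarrow> real" where "Pp v = 1 + 2* v^2 + 6 * v^4 - 4* v^6 + 4* v^8"
definition dBp :: "real \<Rightarrow> real" where "dBp v = 16 * v + 48* v^5 - 64* v^7"
definition dPp :: "real \<Rightarrow> real" where "dPp v = 4* v + 24* v^3 - 24* v^5 + 32* v^7"

lemma poly1: "Bp v ^ 3 - Cp v ^ 6 = (1 - v^6) * (6 * v * Pp v)^2"
  unfolding Bp_def Cp_def Pp_def by algebra

lemma poly2: "6 * v^6 * Pp v * Bp v - 2 * (1 - v^6) * (Pp v + v * dPp v) * Bp v + 3 * (1 - v^6) * v * Pp v * dBp v = 2 * Cp v ^ 5"
  unfolding Bp_def Cp_def Pp_def dBp_def dPp_def by algebra
lemma Bp_ge1: "0 \<le> v \<Longrightarrow> v \<le> 1 \<Longrightarrow> Bp v \<ge> 1"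
proof -
  assume v: "0 \<le> v" "v \<le> 1"
  have "v^8 \<le> v^6" using v by (simp add: power_decreasing)
  then show ?thesis unfolding Bp_def by (simp add: zero_le_power)
qed

lemma Y_deriv:
  fixes s v :: "real \<Rightarrow> real"
  assumes ds: "(s has_real_derivative (v x)^5) (at x)"
    and dv: "(v has_real_derivative -(s x)/3) (at x)"
    and sv: "(s x)^2 = 1 - (v x)^6" and v0: "0 \<le> v x" and v1: "v x \<le> 1"
  shows "((\<lambda>x. 6 * s x * v x * Pp (v x) * Bp (v x) powr (-3/2)) has_real_derivative
           2 * Cp (v x) ^ 5 * Bp (v x) powr (-5/2)) (at x)"
proof -
  have B: "Bp (v x) > 0" using Bp_ge1[OF v0 v1] by simp
  have dB: "((\<lambda>x. Bp (v x)) has_real_derivative dBp (v x) * (-(s x)/3)) (at x)"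
    unfolding Bp_def dBp_def
    by (rule derivative_eq_intros dv refl | simp)+ (simp add: field_simps)
  have dP: "((\<lambda>x. Pp (v x)) has_real_derivative dPp (v x) * (-(s x)/3)) (at x)"
    unfolding Pp_def dPp_def
    by (rule derivative_eq_intros dv refl | simp)+ (simp add: field_simps)
  have dM: "((\<lambda>x. Bp (v x) powr (-3/2)) has_real_derivative (-3/2) * Bp (v x) powr (-5/2) * (dBp (v x) * (-(s x)/3))) (at x)"
    using DERIV_fun_powr[OF dB B, of "-3/2"] by simp
  have dN: "((\<lambda>x. 6 * s x * v x * Pp (v x)) has_real_derivative
      6 * ((v x)^5 * v x * Pp (v x) + s x * (-(s x)/3) * Pp (v x) + s x * v x * (dPp (v x) * (-(s x)/3)))) (at x)"
    by (rule derivative_eq_intros ds dv dP refl | simp)+ (simp add: algebra_simps)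
  have "((\<lambda>x. 6 * s x * v x * Pp (v x) * Bp (v x) powr (-3/2)) has_real_derivative
      6 * ((v x)^5 * v x * Pp (v x) + s x * (-(s x)/3) * Pp (v x) + s x * v x * (dPp (v x) * (-(s x)/3))) * Bp (v x) powr (-3/2)
      + 6 * s x * v x * Pp (v x) * ((-3/2) * Bp (v x) powr (-5/2) * (dBp (v x) * (-(s x)/3)))) (at x)"
    using DERIV_mult'[OF dN dM] by (simp add: algebra_simps)
  moreover have "6 * ((v x)^5 * v x * Pp (v x) + s x * (-(s x)/3) * Pp (v x) + s x * v x * (dPp (v x) * (-(s x)/3))) * Bp (v x) powr (-3/2)
      + 6 * s x * v x * Pp (v x) * ((-3/2) * Bp (v x) powr (-5/2) * (dBp (v x) * (-(s x)/3)))
      = 2 * Cp (v x) ^ 5 * Bp (v x) powr (-5/2)"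
  proof -
    have e: "Bp (v x) powr (-3/2) = Bp (v x) * Bp (v x) powr (-5/2)"
      using B powr_add[of "Bp (v x)" 1 "-5/2"] by simp
    have ss: "s x * s x = 1 - (v x)^6" using sv by (simp add: power2_eq_square)
    have "6 * ((v x)^5 * v x * Pp (v x) + s x * (-(s x)/3) * Pp (v x) + s x * v x * (dPp (v x) * (-(s x)/3))) * Bp (v x)
      + 6 * s x * v x * Pp (v x) * ((-3/2) * (dBp (v x) * (-(s x)/3)))
      = 6 * (v x)^6 * Pp (v x) * Bp (v x) - 2 * (s x * s x) * (Pp (v x) + v x * dPp (v x)) * Bp (v x) + 3 * (s x * s x) * v x * Pp (v x) * dBp (v x)"
      by (simp add: algebra_simps power_def)
    also have "\<dots> = 2 * Cp (v x) ^ 5" unfolding ss by (rule poly2)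
    finally have big: "6 * ((v x)^5 * v x * Pp (v x) + s x * (-(s x)/3) * Pp (v x) + s x * v x * (dPp (v x) * (-(s x)/3))) * Bp (v x)
      + 6 * s x * v x * Pp (v x) * ((-3/2) * (dBp (v x) * (-(s x)/3))) = 2 * Cp (v x) ^ 5" .
    have "6 * ((v x)^5 * v x * Pp (v x) + s x * (-(s x)/3) * Pp (v x) + s x * v x * (dPp (v x) * (-(s x)/3))) * Bp (v x) powr (-3/2)
      + 6 * s x * v x * Pp (v x) * ((-3/2) * Bp (v x) powr (-5/2) * (dBp (v x) * (-(s x)/3)))
      = (6 * ((v x)^5 * v x * Pp (v x) + s x * (-(s x)/3) * Pp (v x) + s x * v x * (dPp (v x) * (-(s x)/3))) * Bp (v x)
      + 6 * s x * v x * Pp (v x) * ((-3/2) * (dBp (v x) * (-(s x)/3)))) * Bp (v x) powr (-5/2)"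
      unfolding e by (simp add: algebra_simps)
    then show ?thesis unfolding big .
  qed
  ultimately show ?thesis by simp
qed

lemma pow16: assumes "0 \<le> (a::real)"
  shows "(a powr (1/6))^6 = a" "(a powr (1/6))^5 = a powr (5/6)" "(a powr (1/6))^2 = a powr (1/3)"
proof -
  have "(a powr (1/6))^6 = a \<and> (a powr (1/6))^5 = a powr (5/6) \<and> (a powr (1/6))^2 = a powr (1/3)"
  proof (cases "a = 0")
    case True then show ?thesis by simp
  next
    case False then show ?thesis using assms by (simp add: powr_power)
  qed
  then show "(a powr (1/6))^6 = a" "(a powr (1/6))^5 = a powr (5/6)" "(a powr (1/6))^2 = a powr (1/3)" by auto
qed

lemma Bpow: assumes "(B::real) > 0"
  shows "(B powr (-1/2))^6 = inverse (B^3)" "(B powr (-3/2))^2 = inverse (B^3)"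
        "(B powr (-1/2))^5 = B powr (-5/2)"
proof -
  have i: "B powr (-3) = inverse (B^3)"
    using assms by (simp add: powr_minus)
  show "(B powr (-1/2))^6 = inverse (B^3)" using assms i by (simp add: powr_power)
  show "(B powr (-3/2))^2 = inverse (B^3)" using assms i by (simp add: powr_power)
  show "(B powr (-1/2))^5 = B powr (-5/2)" using assms by (simp add: powr_power)
qed

lemma sgn_lemma: assumes "(z::real) \<noteq> 0" shows "(z^6) powr (-5/6) * z^5 = (if z > 0 then 1 else -1)"
proof -
  have a: "\<bar>z\<bar> > 0" using assms by simp
  have e6: "z^6 = \<bar>z\<bar> powr 6" using a by (simp add: power_even_abs_numeral)
  have "(z^6) powr (-5/6) = (\<bar>z\<bar> powr 6) powr (-5/6)" by (simp only: e6)
  also have "\<dots> = \<bar>z\<bar> powr (-5)" unfolding powr_powr by simp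
  also have "\<dots> = inverse (\<bar>z\<bar>^5)" using a by (simp add: powr_minus)
  finally have e: "(z^6) powr (-5/6) = inverse (\<bar>z\<bar>^5)" .
  show ?thesis
  proof (cases "z > 0")
    case True then show ?thesis using e by simp
  next
    case False
    then have "\<bar>z\<bar> = - z" by simp
    then have "\<bar>z\<bar>^5 = - (z^5)" by simp
    then show ?thesis using e False assms by simp
  qed
qed

lemma YZ_sq: assumes "s^2 = 1 - v^6" "0 \<le> v" "v \<le> 1"
  shows "(6 * s * v * Pp v * Bp v powr (-3/2))^2 = 1 - (Cp v * Bp v powr (-1/2))^6"
proof -
  have B: "Bp v > 0" using Bp_ge1 assms by force
  have "(6 * s * v * Pp v * Bp v powr (-3/2))^2 = s^2 * (6 * v * Pp v)^2 * inverse (Bp v ^ 3)"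
    using Bpow(2)[OF B] by (simp add: power_mult_distrib)
  also have "\<dots> = (Bp v ^ 3 - Cp v ^ 6) * inverse (Bp v ^ 3)" unfolding assms(1) poly1 by simp
  also have "\<dots> = 1 - (Cp v * Bp v powr (-1/2))^6"
    using Bpow(1)[OF B] B by (simp add: power_mult_distrib field_simps)
  finally show ?thesis .
qed

lemma rhs_eq: assumes "S^2 = 1 - v^6" "0 \<le> v" "v \<le> 1" "S^2 * c = S^2 * v^2"
  shows "(9 - 8 * S^2 - 4 * S^2 * c) / (9 - 8 * S^2 + 8 * S^2 * c) = (Cp v)^2 / Bp v"
        "((Cp v)^2 / Bp v)^3 = (Cp v * Bp v powr (-1/2))^6"
proof -
  have B: "Bp v > 0" using Bp_ge1 assms by force
  have n: "9 - 8 * S^2 - 4 * S^2 * c = (Cp v)^2"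
    using assms(4) unfolding assms(1) Cp_def by (simp add: algebra_simps power2_eq_square) (simp add: power_def algebra_simps)
  have d: "9 - 8 * S^2 + 8 * S^2 * c = Bp v"
    using assms(4) unfolding assms(1) Bp_def by (simp add: algebra_simps power2_eq_square) (simp add: power_def algebra_simps)
  show "(9 - 8 * S^2 - 4 * S^2 * c) / (9 - 8 * S^2 + 8 * S^2 * c) = (Cp v)^2 / Bp v" using n d by simp
  show "((Cp v)^2 / Bp v)^3 = (Cp v * Bp v powr (-1/2))^6"
  proof -
    have a: "(Cp v * Bp v powr (-1/2))^6 = Cp v ^ 6 * inverse (Bp v ^ 3)"
      by (simp only: power_mult_distrib Bpow(1)[OF B])
    have b: "((Cp v)^2 / Bp v)^3 = Cp v ^ 6 * inverse (Bp v ^ 3)"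
    proof -
      have c6: "((Cp v)^2)^3 = Cp v ^ 6" by (subst power_mult[symmetric]) simp
      show ?thesis by (simp only: divide_inverse power_mult_distrib c6 power_inverse)
    qed
    show ?thesis using a b by simp
  qed
qed


lemma Pp_pos: assumes "0 \<le> v" "v \<le> 1" shows "Pp v > 0"
proof -
  have "v^6 \<le> v^4" using assms by (simp add: power_decreasing)
  moreover have "0 \<le> v^2" "0 \<le> v^8" "0 \<le> v^4" by simp_all
  ultimately show ?thesis unfolding Pp_def by linarith
qed

theorem theorem1p2:
  fixes x :: real
  assumes "0 \<le> x" and "x \<le> pi_pq (6/5) 2 / 2"
  shows "sin_pq (6/5) 2 (2 * x) =
    sqrt (1 - ((9 - 8 * (sin_pq (6/5) 2 x)^2 - 4 * (sin_pq (6/5) 2 x)^2 * (cos_pq (6/5) 2 x) powr (2/5))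
             / (9 - 8 * (sin_pq (6/5) 2 x)^2 + 8 * (sin_pq (6/5) 2 x)^2 * (cos_pq (6/5) 2 x) powr (2/5))) ^ 3)"
proof -
  define L where "L = FF 1"
  have L: "L > 0" using FF1_pos L_def by simp
  have xL: "x \<le> L" using assms(2) by (simp add: P_eq L_def)
  define v where "v = (\<lambda>x. (1 - (sb x)^2) powr (1/6))"
  define Y where "Y = (\<lambda>x. 6 * sb x * v x * Pp (v x) * Bp (v x) powr (-3/2))"
  define Z where "Z = (\<lambda>x. Cp (v x) * Bp (v x) powr (-1/2))"
  have sb01: "0 \<le> sb y \<and> sb y \<le> 1" if "y \<in> {0..L}" for y using sb_props[of y] that L_def by auto
  have base: "0 \<le> 1 - (sb y)^2" if "y \<in> {0..L}" for y using sb01[OF that] by (simp add: power_le_one)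
  have v01: "0 \<le> v y \<and> v y \<le> 1" if "y \<in> {0..L}" for y
    using base[OF that] sb01[OF that] unfolding v_def by (auto intro!: powr_le1 simp: zero_le_power2)
  have sv: "(sb y)^2 = 1 - (v y)^6" if "y \<in> {0..L}" for y using pow16(1)[OF base[OF that]] unfolding v_def by simp
  have B1: "Bp (v y) \<ge> 1" if "y \<in> {0..L}" for y using Bp_ge1 v01[OF that] by auto
  have Ysq: "(Y y)^2 = 1 - (Z y)^6" if "y \<in> {0..L}" for y
    unfolding Y_def Z_def using YZ_sq sv[OF that] v01[OF that] by auto
  have Ynn: "Y y \<ge> 0" if "y \<in> {0..L}" for y
    unfolding Y_def using sb01[OF that] v01[OF that] Pp_pos[of "v y"] by auto
  have Y1: "Y y \<le> 1" if "y \<in> {0..L}" for y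
  proof -
    have z6: "0 \<le> (Z y)^6" using zero_le_power2[of "(Z y)^3"] by (simp only: power_mult[symmetric]) simp
    have "(Y y)^2 \<le> 1" using Ysq[OF that] z6 by linarith
    then show ?thesis using power2_le_imp_le[of "Y y" 1] Ynn[OF that] by simp
  qed
  have sbc: "continuous_on {0..L} sb" using sb_cont L_def by simp
  have vc: "continuous_on {0..L} v" unfolding v_def
  proof (rule continuous_on_powr')
    show "continuous_on {0..L} (\<lambda>x. 1 - (sb x)^2)" by (intro continuous_intros sbc)
    show "\<forall>x\<in>{0..L}. 0 \<le> 1 - (sb x)^2 \<and> (1 - (sb x)^2 = 0 \<longrightarrow> 0 < (1/6::real))"
      using base by auto
  qed (intro continuous_intros)
  have Bc: "continuous_on {0..L} (\<lambda>y. Bp (v y))" unfolding Bp_def by (intro continuous_intros vc)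
  have Pc: "continuous_on {0..L} (\<lambda>y. Pp (v y))" unfolding Pp_def by (intro continuous_intros vc)
  have Cc: "continuous_on {0..L} (\<lambda>y. Cp (v y))" unfolding Cp_def by (intro continuous_intros vc)
  have Bpc: "continuous_on {0..L} (\<lambda>y. Bp (v y) powr (-3/2))"
    by (rule continuous_on_powr'[OF Bc]) (auto intro!: continuous_intros dest: B1)
  have Yc: "continuous_on {0..L} Y" unfolding Y_def by (intro continuous_intros sbc vc Pc Bpc)
  have FYc: "continuous_on {0..L} (\<lambda>y. FF (Y y))"
    by (rule continuous_on_compose2[OF FF_cont Yc]) (use Ynn Y1 in auto)
  have sblt: "0 < sb y \<and> sb y < 1" if "0 < y" "y < L" for y
    using sb_strict[of 0 y] sb_strict[of y L] sb0 sb1 that L_def by auto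
  have ds: "(sb has_real_derivative (v y)^5) (at y)" if "0 < y" "y < L" for y
    using sb_deriv[of y] pow16(2)[OF base[of y]] that unfolding v_def L_def by auto
  have dv: "(v has_real_derivative -(sb y)/3) (at y)" if y: "0 < y" "y < L" for y
  proof -
    have sp: "0 < 1 - (sb y)^2" using sblt[OF y] by (simp add: power_less_one_iff abs_square_less_1)
    have dg: "((\<lambda>y. 1 - (sb y)^2) has_real_derivative -(2 * sb y * (v y)^5)) (at y)"
      by (rule derivative_eq_intros ds[OF y] refl | simp)+
    have d1: "(v has_real_derivative (1/6) * (1 - (sb y)^2) powr (1/6 - of_nat 1) * (-(2 * sb y * (v y)^5))) (at y)"
      using DERIV_fun_powr[OF dg sp, of "1/6"] unfolding v_def .
    have e: "(1/6) * (1 - (sb y)^2) powr (1/6 - of_nat 1) * (-(2 * sb y * (v y)^5)) = -(sb y)/3"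
    proof -
      have "(v y)^5 = (1 - (sb y)^2) powr (5/6)" unfolding v_def using pow16(2) sp by simp
      moreover have "(1 - (sb y)^2) powr (-5/6) * (1 - (sb y)^2) powr (5/6) = 1"
        using sp by (simp flip: powr_add)
      ultimately show ?thesis by (simp add: field_simps)
    qed
    show ?thesis using d1 unfolding e .
  qed
  have dY: "(Y has_real_derivative 2 * (Z y)^5) (at y)" if y: "0 < y" "y < L" for y
  proof -
    have yy: "y \<in> {0..L}" using y by auto
    have "(Y has_real_derivative 2 * Cp (v y) ^ 5 * Bp (v y) powr (-5/2)) (at y)"
      unfolding Y_def by (rule Y_deriv[OF ds[OF y] dv[OF y] sv[OF yy]]) (use v01[OF yy] in auto)
    moreover have "2 * Cp (v y) ^ 5 * Bp (v y) powr (-5/2) = 2 * (Z y)^5"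
      unfolding Z_def using Bpow(3)[of "Bp (v y)"] B1[OF yy] by (simp add: power_mult_distrib)
    ultimately show ?thesis by (simp add: mult.assoc)
  qed
  have vstrict: "v b < v a" if "0 \<le> a" "a < b" "b \<le> L" for a b
  proof -
    have "sb a < sb b" using sb_strict[of a b] that L_def by auto
    moreover have "0 \<le> sb a" "sb b \<le> 1" using sb01[of a] sb01[of b] that by auto
    ultimately have "(sb a)^2 < (sb b)^2" by (simp add: power_strict_mono)
    then show ?thesis unfolding v_def using base[of b] that by (intro powr_less_mono2) auto
  qed
  have Cstrict: "Cp (v b) < Cp (v a)" if "0 \<le> a" "a < b" "b \<le> L" for a b
  proof -
    have "v b < v a" "0 \<le> v b" using vstrict[OF that] v01[of b] that by auto
    then have "(v b)^4 < (v a)^4" "(v b)^2 < (v a)^2" by (auto intro: power_strict_mono)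
    then show ?thesis unfolding Cp_def by simp
  qed
  have v0: "v 0 = 1" unfolding v_def by (simp add: sb0)
  have vL: "v L = 0" unfolding v_def L_def by (simp add: sb1)
  obtain x0 where x0: "0 \<le> x0" "x0 \<le> L" "Cp (v x0) = 0"
  proof -
    have "\<exists>x\<ge>0. x \<le> L \<and> - Cp (v x) = 0"
      by (rule IVT'[of "\<lambda>y. - Cp (v y)"]) (use v0 vL L vc in \<open>auto simp: Cp_def intro!: continuous_intros\<close>)
    then show ?thesis using that by auto
  qed
  have x0pos: "0 < x0" using x0 v0 by (cases "x0 = 0") (auto simp: Cp_def)
  have x0L: "x0 < L" using x0 vL by (cases "x0 = L") (auto simp: Cp_def)
  have Cpos: "Cp (v y) > 0" if "0 \<le> y" "y < x0" for y using Cstrict[of y x0] x0 that by auto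
  have Cneg: "Cp (v y) < 0" if "x0 < y" "y \<le> L" for y using Cstrict[of x0 y] x0 that by auto
  have dFY: "((\<lambda>y. FF (Y y)) has_real_derivative (if Cp (v y) > 0 then 2 else -2)) (at y)"
    if y: "0 < y" "y < L" "y \<noteq> x0" for y
  proof -
    have yy: "y \<in> {0..L}" using y by auto
    have Bpos: "Bp (v y) powr (-1/2) > 0" using B1[OF yy] by simp
    have Cnz: "Cp (v y) \<noteq> 0" using Cpos[of y] Cneg[of y] y by (cases "y < x0") auto
    have Znz: "Z y \<noteq> 0" unfolding Z_def using Cnz Bpos by simp
    have Zsgn: "Z y > 0 \<longleftrightarrow> Cp (v y) > 0" unfolding Z_def using Bpos by (simp add: zero_less_mult_iff)
    have Y_lt1: "Y y < 1"
    proof -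
      have "(Z y)^6 > 0" using Znz by (simp add: zero_less_power_eq)
      then have "(Y y)^2 < 1" using Ysq[OF yy] by simp
      then show ?thesis using Ynn[OF yy] by (simp add: power_less_one_iff abs_square_less_1)
    qed
    have vpos: "v y > 0" using vstrict[of y L] vL y by auto
    have Y_pos: "Y y > 0" unfolding Y_def using sblt[OF y(1,2)] vpos Pp_pos[of "v y"] v01[OF yy] B1[OF yy] by simp
    have "((\<lambda>y. FF (Y y)) has_real_derivative ig (Y y) * (2 * (Z y)^5)) (at y)"
      by (rule DERIV_chain2[OF FF_deriv[OF Y_pos Y_lt1] dY[OF y(1,2)]])
    moreover have "ig (Y y) = ((Z y)^6) powr (-5/6)" using Ysq[OF yy] Y_pos by (simp add: ig_alt)
    ultimately show ?thesis using sgn_lemma[OF Znz] Zsgn by (cases "Cp (v y) > 0") (auto simp: algebra_simps)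
  qed
  have Y0: "Y 0 = 0" unfolding Y_def by (simp add: sb0)
  have ph1: "FF (Y y) = 2 * y" if "0 \<le> y" "y \<le> x0" for y
  proof -
    have "FF (Y y) - 2 * y = FF (Y 0) - 2 * 0"
    proof (rule DERIV_isconst2[of 0 x0 "\<lambda>y. FF (Y y) - 2 * y"])
      show "continuous_on {0..x0} (\<lambda>y. FF (Y y) - 2 * y)"
        by (intro continuous_intros continuous_on_subset[OF FYc]) (use x0 in auto)
      fix z assume z: "0 < z" "z < x0"
      have "((\<lambda>y. FF (Y y) - 2 * y) has_real_derivative 2 - 2) (at z)"
        using dFY[of z] Cpos[of z] z x0L by (auto intro!: derivative_eq_intros)
      then show "((\<lambda>y. FF (Y y) - 2 * y) has_real_derivative 0) (at z)" by simp
    qed (use that x0pos in auto)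
    then show ?thesis using Y0 FF0 by simp
  qed
  have Yx0: "Y x0 = 1"
  proof -
    have "(Y x0)^2 = 1" using Ysq[of x0] x0 unfolding Z_def by simp
    then show ?thesis using Ynn[of x0] x0 by (simp add: power2_eq_1_iff)
  qed
  have Lx0: "L = 2 * x0" using ph1[of x0] Yx0 x0pos L_def by simp
  have ph2: "FF (Y y) = 2 * L - 2 * y" if "x0 \<le> y" "y \<le> L" for y
  proof -
    have "FF (Y y) + 2 * y = FF (Y x0) + 2 * x0"
    proof (rule DERIV_isconst2[of x0 L "\<lambda>y. FF (Y y) + 2 * y"])
      show "continuous_on {x0..L} (\<lambda>y. FF (Y y) + 2 * y)"
        by (intro continuous_intros continuous_on_subset[OF FYc]) (use x0 in auto)
      fix z assume z: "x0 < z" "z < L"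
      have "((\<lambda>y. FF (Y y) + 2 * y) has_real_derivative -2 + 2) (at z)"
        using dFY[of z] Cneg[of z] z x0pos by (auto intro!: derivative_eq_intros)
      then show "((\<lambda>y. FF (Y y) + 2 * y) has_real_derivative 0) (at z)" by simp
    qed (use that x0L in auto)
    then show ?thesis using Yx0 Lx0 L_def by simp
  qed
  have xx: "x \<in> {0..L}" using assms(1) xL by auto
  have main: "SP (2 * x) = Y x"
  proof (cases "x \<le> x0")
    case True
    have "SP (2 * x) = sb (2 * x)" using sinpq_first[of "2 * x"] True assms(1) Lx0 L_def by auto
    also have "\<dots> = sb (FF (Y x))" using ph1[of x] True assms(1) by simp
    also have "\<dots> = Y x" using sb_FF[of "Y x"] Ynn[OF xx] Y1[OF xx] by simp
    finally show ?thesis .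
  next
    case False
    have "SP (2 * x) = sb (2 * FF 1 - 2 * x)" using sinpq_second[of "2 * x"] False xL Lx0 L_def by auto
    also have "\<dots> = sb (FF (Y x))" using ph2[of x] False xL L_def by simp
    also have "\<dots> = Y x" using sb_FF[of "Y x"] Ynn[OF xx] Y1[OF xx] by simp
    finally show ?thesis .
  qed
  have Sx: "SP x = sb x" using sinpq_first[of x] assms(1) xL L_def by simp
  have Sc: "(sb x)^2 * (cos_pq (6/5) 2 x) powr (2/5) = (sb x)^2 * (v x)^2"
  proof -
    consider "x = 0" | "0 < x \<and> x < L" | "x = L" using assms(1) xL by linarith
    then show ?thesis
    proof cases
      case 1 then show ?thesis by (simp add: sb0)
    next
      case 2
      then have "cos_pq (6/5) 2 x = (1 - (sb x)^2) powr (5/6)" using cos_inner L_def by simp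
      then have "(cos_pq (6/5) 2 x) powr (2/5) = (1 - (sb x)^2) powr (1/3)" by (simp add: powr_powr)
      also have "\<dots> = (v x)^2" unfolding v_def using pow16(3)[OF base[OF xx]] by simp
      finally show ?thesis by simp
    next
      case 3 then show ?thesis using cos_FF1 vL L_def by simp
    qed
  qed
  have r: "(9 - 8 * (sb x)^2 - 4 * (sb x)^2 * (cos_pq (6/5) 2 x) powr (2/5))
             / (9 - 8 * (sb x)^2 + 8 * (sb x)^2 * (cos_pq (6/5) 2 x) powr (2/5)) = (Cp (v x))^2 / Bp (v x)"
    "((Cp (v x))^2 / Bp (v x))^3 = (Z x)^6"
    using rhs_eq[OF sv[OF xx] _ _ Sc] v01[OF xx] unfolding Z_def by auto
  have "sqrt (1 - ((9 - 8 * (SP x)^2 - 4 * (SP x)^2 * (cos_pq (6/5) 2 x) powr (2/5))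
             / (9 - 8 * (SP x)^2 + 8 * (SP x)^2 * (cos_pq (6/5) 2 x) powr (2/5))) ^ 3) = sqrt ((Y x)^2)"
    unfolding Sx r Ysq[OF xx] ..
  also have "\<dots> = Y x" using Ynn[OF xx] by simp
  finally show ?thesis using main by simp
qed

end
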